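(* Let $C\subseteq[n]$ be a nonempty proper subset and let $\ket{\psi}=\ket{a}_C\otimes\ket{b}_{\overline{C}}$ be an $n$-qubit state, where $\ket{a}_C$ and $\ket{b}_{\overline{C}}$ are each $\epsilon$-far from every multipartite product state (on the qubits of $C$ and of $\overline{C}$ respectively). Let $S\subseteq[n]$ be a nonempty proper subset of the qubits. Then the reduced state $\psi_S$ on the qubits of $S$ satisfies $\mathrm{Tr}(\psi_S^2)=1$ if $S=C$ or $S=\overline{C}$, and otherwise $\mathrm{Tr}(\psi_S^2)\le1-\epsilon^2$.
   Context: $\overline{S}=[n]\setminus S$ for $S\subseteq[n]$. A state on a set $Q$ of qubits is multipartite product if it can be written as $\ket{a'}_D\otimes\ket{b'}_{Q\setminus D}$ for some nonempty proper subset $D\subsetneq Q$. A pure state $\ket{\phi}$ is $\epsilon$-far from a set $\mathcal{P}$ of pure states if $|\langle\phi|\chi\rangle|^2\le1-\epsilon^2$ for all $\ket{\chi}\in\mathcal{P}$ (equivalently trace distance at least $\epsilon$). *)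

theory Defs
  imports Complex_Main
begin

text \<open>A computational basis vector of the qubits Q is identified with the subset
  x \<subseteq> Q of qubits that are in state 1.  A (pure) state on Q is a
  normalized amplitude function supported on Pow Q.\<close>

definition is_state :: "nat set \<Rightarrow> (nat set \<Rightarrow> complex) \<Rightarrow> bool" where
  "is_state Q f \<longleftrightarrow> finite Q \<and> (\<forall>x. f x \<noteq> 0 \<longrightarrow> x \<subseteq> Q)
     \<and> (\<Sum>x\<in>Pow Q. (cmod (f x))\<^sup>2) = 1"

definition tensor :: "nat set \<Rightarrow> (nat set \<Rightarrow> complex) \<Rightarrow> nat set \<Rightarrow> (nat set \<Rightarrow> complex)
    \<Rightarrow> nat set \<Rightarrow> complex" where
  "tensor D f E g = (\<lambda>x. if x \<subseteq> D \<union> E then f (x \<inter> D) * g (x \<inter> E) else 0)"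

definition inner_Q :: "nat set \<Rightarrow> (nat set \<Rightarrow> complex) \<Rightarrow> (nat set \<Rightarrow> complex) \<Rightarrow> complex" where
  "inner_Q Q f g = (\<Sum>x\<in>Pow Q. cnj (f x) * g x)"

definition multipartite_product :: "nat set \<Rightarrow> (nat set \<Rightarrow> complex) \<Rightarrow> bool" where
  "multipartite_product Q \<chi> \<longleftrightarrow> (\<exists>D a' b'. D \<noteq> {} \<and> D \<subset> Q \<and>
     is_state D a' \<and> is_state (Q - D) b' \<and> \<chi> = tensor D a' (Q - D) b')"

definition far_from_product :: "real \<Rightarrow> nat set \<Rightarrow> (nat set \<Rightarrow> complex) \<Rightarrow> bool" where
  "far_from_product \<epsilon> Q \<phi> \<longleftrightarrow>
     (\<forall>\<chi>. is_state Q \<chi> \<and> multipartite_product Q \<chi> \<longrightarrow> (cmod (inner_Q Q \<phi> \<chi>))\<^sup>2 \<le> 1 - \<epsilon>\<^sup>2)"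

definition reduced :: "nat \<Rightarrow> (nat set \<Rightarrow> complex) \<Rightarrow> nat set \<Rightarrow> nat set \<Rightarrow> nat set \<Rightarrow> complex" where
  "reduced n \<psi> S x y = (\<Sum>z\<in>Pow ({..<n} - S). \<psi> (x \<union> z) * cnj (\<psi> (y \<union> z)))"

definition purity :: "nat \<Rightarrow> (nat set \<Rightarrow> complex) \<Rightarrow> nat set \<Rightarrow> complex" where
  "purity n \<psi> S = (\<Sum>x\<in>Pow S. \<Sum>y\<in>Pow S. reduced n \<psi> S x y * reduced n \<psi> S y x)"

end

theory Submission imports Defs begin

lemma pow_union_split:
  assumes "finite D" "finite E" "D \<inter> E = {}"
  shows "(\<Sum>x\<in>Pow (D \<union> E). h x) = (\<Sum>x1\<in>Pow D. \<Sum>x2\<in>Pow E. h (x1 \<union> x2))"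
proof -
  have inj: "inj_on (\<lambda>(x,y). x \<union> y) (Pow D \<times> Pow E)"
  proof (rule inj_onI, clarify)
    fix x1 x2 y1 y2 assume "x1 \<subseteq> D" "x2 \<subseteq> E" "y1 \<subseteq> D" "y2 \<subseteq> E" "x1 \<union> x2 = y1 \<union> y2"
    then show "x1 = y1 \<and> x2 = y2" using assms(3) by blast
  qed
  have img: "(\<lambda>(x,y). x \<union> y) ` (Pow D \<times> Pow E) = Pow (D \<union> E)"
  proof
    show "Pow (D \<union> E) \<subseteq> (\<lambda>(x,y). x \<union> y) ` (Pow D \<times> Pow E)"
    proof
      fix X assume "X \<in> Pow (D \<union> E)"
      then have "X = (\<lambda>(x,y). x \<union> y) (X \<inter> D, X \<inter> E)" by auto
      then show "X \<in> (\<lambda>(x,y). x \<union> y) ` (Pow D \<times> Pow E)" by blast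
    qed
  qed auto
  have "(\<Sum>x\<in>Pow (D \<union> E). h x) = (\<Sum>p\<in>Pow D \<times> Pow E. h ((\<lambda>(x,y). x \<union> y) p))"
    using sum.reindex[OF inj, of h] img by (simp add: comp_def)
  also have "\<dots> = (\<Sum>x1\<in>Pow D. \<Sum>x2\<in>Pow E. h (x1 \<union> x2))"
    by (simp add: sum.cartesian_product case_prod_unfold)
  finally show ?thesis .
qed

lemma int_split1: "x1 \<subseteq> D \<Longrightarrow> x2 \<subseteq> E \<Longrightarrow> D \<inter> E = {} \<Longrightarrow> (x1 \<union> x2) \<inter> D = x1"
  by blast
lemma int_split2: "x1 \<subseteq> D \<Longrightarrow> x2 \<subseteq> E \<Longrightarrow> D \<inter> E = {} \<Longrightarrow> (x1 \<union> x2) \<inter> E = x2"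
  by blast

lemma tensor_eval:
  assumes "x1 \<subseteq> D" "x2 \<subseteq> E" "D \<inter> E = {}"
  shows "tensor D f E g (x1 \<union> x2) = f x1 * g x2"
  using assms unfolding tensor_def by (auto simp: int_split1 int_split2)

lemma tensor_state:
  assumes "is_state D f" "is_state E g" "D \<inter> E = {}"
  shows "is_state (D \<union> E) (tensor D f E g)"
proof -
  have fD: "finite D" and fE: "finite E" using assms unfolding is_state_def by auto
  have "(\<Sum>x\<in>Pow (D \<union> E). (cmod (tensor D f E g x))\<^sup>2)
      = (\<Sum>x1\<in>Pow D. \<Sum>x2\<in>Pow E. (cmod (tensor D f E g (x1 \<union> x2)))\<^sup>2)"
    by (rule pow_union_split[OF fD fE assms(3)])
  also have "\<dots> = (\<Sum>x1\<in>Pow D. \<Sum>x2\<in>Pow E. (cmod (f x1))\<^sup>2 * (cmod (g x2))\<^sup>2)"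
    using assms(3) by (intro sum.cong refl) (simp add: tensor_eval norm_mult power_mult_distrib)
  also have "\<dots> = (\<Sum>x1\<in>Pow D. (cmod (f x1))\<^sup>2) * (\<Sum>x2\<in>Pow E. (cmod (g x2))\<^sup>2)"
    by (simp add: sum_product)
  also have "\<dots> = 1" using assms unfolding is_state_def by simp
  finally show ?thesis using fD fE unfolding is_state_def tensor_def by auto
qed

definition rd :: "nat set \<Rightarrow> (nat set \<Rightarrow> complex) \<Rightarrow> nat set \<Rightarrow> nat set \<Rightarrow> nat set \<Rightarrow> complex" where
  "rd Q f T x y = (\<Sum>z\<in>Pow (Q - T). f (x \<union> z) * cnj (f (y \<union> z)))"

definition pr :: "nat set \<Rightarrow> (nat set \<Rightarrow> complex) \<Rightarrow> nat set \<Rightarrow> complex" where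
  "pr Q f T = (\<Sum>x\<in>Pow T. \<Sum>y\<in>Pow T. rd Q f T x y * rd Q f T y x)"

lemma purity_pr: "purity n \<psi> S = pr {..<n} \<psi> S"
  unfolding purity_def pr_def reduced_def rd_def by simp

lemma rd_tensor:
  assumes fD: "finite D" and fE: "finite E" and dj: "D \<inter> E = {}" and T: "T \<subseteq> D \<union> E"
    and x: "x \<subseteq> T" and y: "y \<subseteq> T"
  shows "rd (D \<union> E) (tensor D f E g) T x y = rd D f (T \<inter> D) (x \<inter> D) (y \<inter> D) * rd E g (T \<inter> E) (x \<inter> E) (y \<inter> E)"
proof -
  have e: "D \<union> E - T = (D - T) \<union> (E - T)" by blast
  have e1: "D - T \<inter> D = D - T" "E - T \<inter> E = E - T" by auto
  have "rd (D \<union> E) (tensor D f E g) T x y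
      = (\<Sum>z1\<in>Pow (D - T). \<Sum>z2\<in>Pow (E - T). tensor D f E g (x \<union> (z1 \<union> z2)) * cnj (tensor D f E g (y \<union> (z1 \<union> z2))))"
    unfolding rd_def e using fD fE dj by (intro pow_union_split) auto
  also have "\<dots> = (\<Sum>z1\<in>Pow (D - T). \<Sum>z2\<in>Pow (E - T).
      (f ((x \<inter> D) \<union> z1) * cnj (f ((y \<inter> D) \<union> z1))) * (g ((x \<inter> E) \<union> z2) * cnj (g ((y \<inter> E) \<union> z2))))"
  proof (intro sum.cong refl)
    fix z1 z2 assume z1: "z1 \<in> Pow (D - T)" and z2: "z2 \<in> Pow (E - T)"
    have "x \<union> (z1 \<union> z2) = ((x \<inter> D) \<union> z1) \<union> ((x \<inter> E) \<union> z2)" using x T by blast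
    moreover have "y \<union> (z1 \<union> z2) = ((y \<inter> D) \<union> z1) \<union> ((y \<inter> E) \<union> z2)" using y T by blast
    moreover have "x \<inter> D \<union> z1 \<subseteq> D" "x \<inter> E \<union> z2 \<subseteq> E" "y \<inter> D \<union> z1 \<subseteq> D" "y \<inter> E \<union> z2 \<subseteq> E"
      using z1 z2 by auto
    ultimately show "tensor D f E g (x \<union> (z1 \<union> z2)) * cnj (tensor D f E g (y \<union> (z1 \<union> z2))) =
      (f ((x \<inter> D) \<union> z1) * cnj (f ((y \<inter> D) \<union> z1))) * (g ((x \<inter> E) \<union> z2) * cnj (g ((y \<inter> E) \<union> z2)))"
      using dj by (simp only: tensor_eval) (simp add: ac_simps)
  qed
  also have "\<dots> = rd D f (T \<inter> D) (x \<inter> D) (y \<inter> D) * rd E g (T \<inter> E) (x \<inter> E) (y \<inter> E)"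
  proof -
    have "D - T \<inter> D = D - T" "E - T \<inter> E = E - T" by auto
    then show ?thesis unfolding rd_def by (simp add: sum_product)
  qed
  finally show ?thesis .
qed

lemma pr_tensor:
  assumes fD: "finite D" and fE: "finite E" and dj: "D \<inter> E = {}" and T: "T \<subseteq> D \<union> E"
  shows "pr (D \<union> E) (tensor D f E g) T = pr D f (T \<inter> D) * pr E g (T \<inter> E)"
proof -
  let ?A = "rd D f (T \<inter> D)" and ?B = "rd E g (T \<inter> E)"
  have fT1: "finite (T \<inter> D)" and fT2: "finite (T \<inter> E)" using fD fE by auto
  have dj2: "(T \<inter> D) \<inter> (T \<inter> E) = {}" using dj by blast
  have Te: "T = (T \<inter> D) \<union> (T \<inter> E)" using T by blast
  have "pr (D \<union> E) (tensor D f E g) T = (\<Sum>x\<in>Pow T. \<Sum>y\<in>Pow T. ?A (x \<inter> D) (y \<inter> D) * ?B (x \<inter> E) (y \<inter> E)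
       * (?A (y \<inter> D) (x \<inter> D) * ?B (y \<inter> E) (x \<inter> E)))"
    unfolding pr_def using fD fE dj T by (intro sum.cong refl) (simp add: rd_tensor)
  also have "\<dots> = (\<Sum>x1\<in>Pow (T \<inter> D). \<Sum>x2\<in>Pow (T \<inter> E). \<Sum>y1\<in>Pow (T \<inter> D). \<Sum>y2\<in>Pow (T \<inter> E).
       ?A x1 y1 * ?B x2 y2 * (?A y1 x1 * ?B y2 x2))"
  proof -
    have gen: "(\<Sum>x\<in>Pow T. \<Sum>y\<in>Pow T. h x y) = (\<Sum>x1\<in>Pow (T \<inter> D). \<Sum>x2\<in>Pow (T \<inter> E).
      \<Sum>y1\<in>Pow (T \<inter> D). \<Sum>y2\<in>Pow (T \<inter> E). h (x1 \<union> x2) (y1 \<union> y2))" for h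
    proof -
      have "(\<Sum>x\<in>Pow T. \<Sum>y\<in>Pow T. h x y) = (\<Sum>x\<in>Pow ((T \<inter> D) \<union> (T \<inter> E)). \<Sum>y\<in>Pow ((T \<inter> D) \<union> (T \<inter> E)). h x y)"
        using Te by simp
      also have "\<dots> = (\<Sum>x1\<in>Pow (T \<inter> D). \<Sum>x2\<in>Pow (T \<inter> E). \<Sum>y\<in>Pow ((T \<inter> D) \<union> (T \<inter> E)). h (x1 \<union> x2) y)"
        by (rule pow_union_split[OF fT1 fT2 dj2])
      also have "\<dots> = (\<Sum>x1\<in>Pow (T \<inter> D). \<Sum>x2\<in>Pow (T \<inter> E).
      \<Sum>y1\<in>Pow (T \<inter> D). \<Sum>y2\<in>Pow (T \<inter> E). h (x1 \<union> x2) (y1 \<union> y2))"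
        by (intro sum.cong refl pow_union_split[OF fT1 fT2 dj2])
      finally show ?thesis .
    qed
    have i1: "(a \<union> b) \<inter> D = a" "(a \<union> b) \<inter> E = b" if "a \<in> Pow (T \<inter> D)" "b \<in> Pow (T \<inter> E)" for a b
      using that dj by blast+
    show ?thesis by (subst gen) (intro sum.cong refl, simp add: i1)
  qed
  also have "\<dots> = (\<Sum>x1\<in>Pow (T \<inter> D). \<Sum>x2\<in>Pow (T \<inter> E). \<Sum>y1\<in>Pow (T \<inter> D). \<Sum>y2\<in>Pow (T \<inter> E).
       (?A x1 y1 * ?A y1 x1) * (?B x2 y2 * ?B y2 x2))"
    by (simp add: ac_simps)
  also have "\<dots> = (\<Sum>x1\<in>Pow (T \<inter> D). \<Sum>y1\<in>Pow (T \<inter> D). \<Sum>x2\<in>Pow (T \<inter> E). \<Sum>y2\<in>Pow (T \<inter> E).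
       (?A x1 y1 * ?A y1 x1) * (?B x2 y2 * ?B y2 x2))"
    by (rule sum.cong[OF refl], rule sum.swap)
  also have "\<dots> = pr D f (T \<inter> D) * pr E g (T \<inter> E)"
    unfolding pr_def by (simp only: sum_distrib_right, simp only: sum_distrib_left)
  finally show ?thesis .
qed

lemma rd_cnj: "rd Q f T y x = cnj (rd Q f T x y)"
  unfolding rd_def by (simp add: ac_simps)

lemma pr_real: "pr Q f T = of_real (\<Sum>x\<in>Pow T. \<Sum>y\<in>Pow T. (cmod (rd Q f T x y))\<^sup>2)"
proof -
  have "rd Q f T x y * rd Q f T y x = of_real ((cmod (rd Q f T x y))\<^sup>2)" for x y
    by (subst rd_cnj) (simp only: complex_norm_square)
  then show ?thesis unfolding pr_def by simp
qed

lemma state_sum: "is_state Q f \<Longrightarrow> (\<Sum>x\<in>Pow Q. f x * cnj (f x)) = 1"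
proof -
  assume "is_state Q f"
  then have "(\<Sum>x\<in>Pow Q. (cmod (f x))\<^sup>2) = 1" unfolding is_state_def by simp
  then have "complex_of_real (\<Sum>x\<in>Pow Q. (cmod (f x))\<^sup>2) = 1" by simp
  then show ?thesis by (simp only: of_real_sum complex_norm_square)
qed

lemma pr_full: assumes "is_state Q f" shows "pr Q f Q = 1"
proof -
  have "rd Q f Q x y = f x * cnj (f y)" for x y unfolding rd_def by simp
  then have "pr Q f Q = (\<Sum>x\<in>Pow Q. \<Sum>y\<in>Pow Q. (f x * cnj (f x)) * (f y * cnj (f y)))"
    unfolding pr_def by (simp add: ac_simps)
  also have "\<dots> = (\<Sum>x\<in>Pow Q. f x * cnj (f x)) * (\<Sum>y\<in>Pow Q. f y * cnj (f y))"
    by (simp add: sum_product)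
  finally show ?thesis using state_sum[OF assms] by simp
qed

lemma pr_empty: assumes "is_state Q f" shows "pr Q f {} = 1"
  unfolding pr_def rd_def using state_sum[OF assms] by simp

lemma pr_far_bound:
  assumes st: "is_state Q f" and Tne: "T \<noteq> {}" and Tsub: "T \<subset> Q" and far: "far_from_product \<epsilon> Q f"
  shows "(\<Sum>x\<in>Pow T. \<Sum>y\<in>Pow T. (cmod (rd Q f T x y))\<^sup>2) \<le> 1 - \<epsilon>\<^sup>2"
proof -
  define U where "U = Q - T"
  define K where "K = 1 - \<epsilon>\<^sup>2"
  have fQ: "finite Q" using st unfolding is_state_def by simp
  have fT: "finite T" and fU: "finite U" using fQ Tsub unfolding U_def by (auto intro: finite_subset)
  have dj: "T \<inter> U = {}" and QTU: "T \<union> U = Q" using Tsub unfolding U_def by auto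
  have far_use: "(cmod (inner_Q Q f (tensor T u U v)))\<^sup>2 \<le> K" if "is_state T u" "is_state U v" for u v
  proof -
    have "is_state Q (tensor T u U v)" using tensor_state[OF that dj] QTU by simp
    moreover have "multipartite_product Q (tensor T u U v)"
      unfolding multipartite_product_def using that Tne Tsub unfolding U_def by blast
    ultimately show ?thesis using far unfolding far_from_product_def K_def by blast
  qed
  define \<delta> where "\<delta> = (\<lambda>x::nat set. if x = {} then (1::complex) else 0)"
  have dst: "is_state A \<delta>" if "finite A" for A
  proof -
    have "(cmod (\<delta> x))\<^sup>2 = (if x = {} then 1 else 0)" for x unfolding \<delta>_def by simp
    moreover have "(\<Sum>x\<in>Pow A. (if x = {} then 1 else 0::real)) = 1"
      using that by (subst sum.delta) auto
    ultimately have "(\<Sum>x\<in>Pow A. (cmod (\<delta> x))\<^sup>2) = 1" by simp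
    then show ?thesis using that unfolding is_state_def \<delta>_def by auto
  qed
  have K0: "K \<ge> 0" using far_use[OF dst[OF fT] dst[OF fU]] by (meson order_trans zero_le_power2)
  have key: "(\<Sum>x\<in>Pow T. (cmod (\<Sum>z\<in>Pow U. f (x \<union> z) * t z))\<^sup>2) \<le> K * (\<Sum>z\<in>Pow U. (cmod (t z))\<^sup>2)" for t
  proof -
    define w where "w x = (\<Sum>z\<in>Pow U. f (x \<union> z) * t z)" for x
    define W where "W = (\<Sum>x\<in>Pow T. (cmod (w x))\<^sup>2)"
    define Tn where "Tn = (\<Sum>z\<in>Pow U. (cmod (t z))\<^sup>2)"
    have W0: "W \<ge> 0" unfolding W_def by (simp add: sum_nonneg)
    have Tn0: "Tn \<ge> 0" unfolding Tn_def by (simp add: sum_nonneg)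
    have "W \<le> K * Tn"
    proof (cases "Tn = 0")
      case True
      then have "\<forall>z\<in>Pow U. (cmod (t z))\<^sup>2 = 0" unfolding Tn_def using fU
        by (subst sum_nonneg_eq_0_iff[symmetric]) auto
      then have "w x = 0" for x unfolding w_def by simp
      then show ?thesis unfolding W_def using True by simp
    next
      case Tnz: False
      show ?thesis
      proof (cases "W = 0")
        case True then show ?thesis using K0 Tn0 by simp
      next
        case Wz: False
        have Wp: "W > 0" and Tp: "Tn > 0" using W0 Tn0 Wz Tnz by auto
        define u where "u x = (if x \<subseteq> T then w x / of_real (sqrt W) else 0)" for x
        define v where "v z = (if z \<subseteq> U then cnj (t z) / of_real (sqrt Tn) else 0)" for z
        have ust: "is_state T u"
        proof -
          have "(\<Sum>x\<in>Pow T. (cmod (u x))\<^sup>2) = (\<Sum>x\<in>Pow T. (cmod (w x))\<^sup>2 / W)"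
            unfolding u_def using Wp by (intro sum.cong refl) (simp add: norm_divide power_divide)
          also have "\<dots> = 1" using Wp unfolding W_def by (simp add: sum_divide_distrib[symmetric])
          finally show ?thesis using fT unfolding is_state_def u_def by auto
        qed
        have vst: "is_state U v"
        proof -
          have "(\<Sum>z\<in>Pow U. (cmod (v z))\<^sup>2) = (\<Sum>z\<in>Pow U. (cmod (t z))\<^sup>2 / Tn)"
            unfolding v_def using Tp by (intro sum.cong refl) (simp add: norm_divide power_divide)
          also have "\<dots> = 1" using Tp unfolding Tn_def by (simp add: sum_divide_distrib[symmetric])
          finally show ?thesis using fU unfolding is_state_def v_def by auto
        qed
        have "inner_Q Q f (tensor T u U v) = (\<Sum>x1\<in>Pow T. \<Sum>z\<in>Pow U. cnj (f (x1 \<union> z)) * tensor T u U v (x1 \<union> z))"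
          unfolding inner_Q_def QTU[symmetric] by (rule pow_union_split[OF fT fU dj])
        also have "\<dots> = (\<Sum>x1\<in>Pow T. (w x1 / of_real (sqrt W)) * ((\<Sum>z\<in>Pow U. cnj (f (x1 \<union> z) * t z)) / of_real (sqrt Tn)))"
          unfolding sum_distrib_left sum_divide_distrib
          by (intro sum.cong refl) (simp add: tensor_eval dj u_def v_def)
        also have "\<dots> = (\<Sum>x1\<in>Pow T. (w x1 * cnj (w x1)) / of_real (sqrt W * sqrt Tn))"
          unfolding w_def by (intro sum.cong refl) simp
        also have "\<dots> = of_real (W / (sqrt W * sqrt Tn))"
        proof -
          have "(\<Sum>x1\<in>Pow T. w x1 * cnj (w x1)) = of_real W"
            unfolding W_def of_real_sum by (simp only: complex_norm_square)
          then show ?thesis unfolding sum_divide_distrib[symmetric] by simp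
        qed
        finally have "(cmod (inner_Q Q f (tensor T u U v)))\<^sup>2 = (W / (sqrt W * sqrt Tn))\<^sup>2"
          using Wp Tp by (simp add: norm_divide norm_mult)
        also have "\<dots> = W / Tn"
        proof -
          have "(sqrt W * sqrt Tn)\<^sup>2 = W * Tn" using Wp Tp by (simp add: power_mult_distrib)
          then show ?thesis using Wp by (simp add: power_divide power2_eq_square)
        qed
        finally have "W / Tn \<le> K" using far_use[OF ust vst] by simp
        then show ?thesis using Tp by (simp add: pos_divide_le_eq mult.commute)
      qed
    qed
    then show ?thesis unfolding W_def Tn_def w_def .
  qed
  have "(\<Sum>x\<in>Pow T. \<Sum>y\<in>Pow T. (cmod (rd Q f T x y))\<^sup>2) = (\<Sum>y\<in>Pow T. \<Sum>x\<in>Pow T. (cmod (\<Sum>z\<in>Pow U. f (x \<union> z) * cnj (f (y \<union> z))))\<^sup>2)"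
    unfolding rd_def U_def by (rule sum.swap)
  also have "\<dots> \<le> (\<Sum>y\<in>Pow T. K * (\<Sum>z\<in>Pow U. (cmod (cnj (f (y \<union> z))))\<^sup>2))"
    by (intro sum_mono key)
  also have "\<dots> = K * (\<Sum>x\<in>Pow (T \<union> U). (cmod (f x))\<^sup>2)"
    by (simp add: pow_union_split[OF fT fU dj] sum_distrib_left)
  also have "\<dots> = K" using st QTU unfolding is_state_def by simp
  finally show ?thesis unfolding K_def .
qed

lemma pr_summary:
  assumes st: "is_state Q f" and far: "far_from_product \<epsilon> Q f" and T: "T \<subseteq> Q"
  shows "\<exists>r. pr Q f T = of_real r \<and> 0 \<le> r \<and> r \<le> 1 \<and> (T \<noteq> {} \<and> T \<noteq> Q \<longrightarrow> r \<le> 1 - \<epsilon>\<^sup>2)"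
proof (cases "T = {} \<or> T = Q")
  case True
  then show ?thesis using pr_full[OF st] pr_empty[OF st] by (intro exI[of _ 1]) auto
next
  case False
  define r where "r = (\<Sum>x\<in>Pow T. \<Sum>y\<in>Pow T. (cmod (rd Q f T x y))\<^sup>2)"
  have "r \<le> 1 - \<epsilon>\<^sup>2" unfolding r_def using False T by (intro pr_far_bound[OF st _ _ far]) auto
  moreover have "0 \<le> r" unfolding r_def by (intro sum_nonneg) auto
  moreover have "1 - \<epsilon>\<^sup>2 \<le> 1" by simp
  ultimately have "r \<le> 1" by linarith
  then show ?thesis using pr_real[of Q f T] \<open>0 \<le> r\<close> \<open>r \<le> 1 - \<epsilon>\<^sup>2\<close> unfolding r_def[symmetric]
    by (intro exI[of _ r]) auto
qed

theorem proposition2p17: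
  fixes n :: nat and C S :: "nat set" and a b :: "nat set \<Rightarrow> complex" and \<epsilon> :: real
  assumes "C \<noteq> {}" and "C \<subset> {..<n}"
    and "is_state C a" and "is_state ({..<n} - C) b"
    and "far_from_product \<epsilon> C a" and "far_from_product \<epsilon> ({..<n} - C) b"
    and "S \<noteq> {}" and "S \<subset> {..<n}"
  shows "(S = C \<or> S = {..<n} - C \<longrightarrow> purity n (tensor C a ({..<n} - C) b) S = 1)
       \<and> (S \<noteq> C \<and> S \<noteq> {..<n} - C \<longrightarrow> Re (purity n (tensor C a ({..<n} - C) b) S) \<le> 1 - \<epsilon>\<^sup>2)"
proof -
  define Cb where "Cb = {..<n} - C"
  have N: "{..<n} = C \<union> Cb" and dj: "C \<inter> Cb = {}" using assms(2) unfolding Cb_def by auto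
  have fC: "finite C" and fCb: "finite Cb" using assms(3,4) unfolding Cb_def is_state_def by auto
  have P: "purity n (tensor C a Cb b) S = pr C a (S \<inter> C) * pr Cb b (S \<inter> Cb)"
    unfolding purity_pr N using assms(8) N by (intro pr_tensor[OF fC fCb dj]) auto
  obtain ra where ra: "pr C a (S \<inter> C) = of_real ra" "0 \<le> ra" "ra \<le> 1"
      "S \<inter> C \<noteq> {} \<and> S \<inter> C \<noteq> C \<longrightarrow> ra \<le> 1 - \<epsilon>\<^sup>2"
    using pr_summary[OF assms(3) assms(5), of "S \<inter> C"] by auto
  obtain rb where rb: "pr Cb b (S \<inter> Cb) = of_real rb" "0 \<le> rb" "rb \<le> 1"
      "S \<inter> Cb \<noteq> {} \<and> S \<inter> Cb \<noteq> Cb \<longrightarrow> rb \<le> 1 - \<epsilon>\<^sup>2"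
    using pr_summary[OF assms(4) assms(6), of "S \<inter> Cb"] unfolding Cb_def by auto
  have one: "purity n (tensor C a Cb b) S = 1" if "S = C \<or> S = Cb"
  proof -
    have "S \<inter> C = C \<and> S \<inter> Cb = {} \<or> S \<inter> C = {} \<and> S \<inter> Cb = Cb" using that dj by auto
    then show ?thesis unfolding P using pr_full[OF assms(3)] pr_empty[OF assms(3)]
      pr_full[OF assms(4)] pr_empty[OF assms(4)] unfolding Cb_def by auto
  qed
  have two: "Re (purity n (tensor C a Cb b) S) \<le> 1 - \<epsilon>\<^sup>2" if "S \<noteq> C" "S \<noteq> Cb"
  proof -
    have Re: "Re (purity n (tensor C a Cb b) S) = ra * rb" unfolding P ra(1) rb(1) by simp
    have SN: "S \<subseteq> C \<union> Cb" and SNe: "S \<noteq> C \<union> Cb" using assms(8) N by auto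
    have "(S \<inter> C \<noteq> {} \<and> S \<inter> C \<noteq> C) \<or> (S \<inter> Cb \<noteq> {} \<and> S \<inter> Cb \<noteq> Cb)"
      using that SN SNe assms(7) dj by blast
    then show ?thesis
    proof
      assume "S \<inter> C \<noteq> {} \<and> S \<inter> C \<noteq> C"
      then have "ra \<le> 1 - \<epsilon>\<^sup>2" using ra by auto
      moreover have "ra * rb \<le> ra" using ra(2) rb(3) by (simp add: mult_left_le)
      ultimately show ?thesis unfolding Re by linarith
    next
      assume "S \<inter> Cb \<noteq> {} \<and> S \<inter> Cb \<noteq> Cb"
      then have "rb \<le> 1 - \<epsilon>\<^sup>2" using rb by auto
      moreover have "ra * rb \<le> rb" using rb(2) ra(3) using mult_right_mono[of ra 1 rb] by simp
      ultimately show ?thesis unfolding Re by linarith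
    qed
  qed
  show ?thesis using one two unfolding Cb_def by blast
qed

end
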